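(* Let $\lambda,\alpha,K,L,m>0$, $s>1/2$ and $\theta\in\Theta(K,L,s,m)$. Let $Q_\theta$ be the Markov kernel on $\mathbb{R}$ given by $Q_\theta(x,A)=\mathbb{P}(e^{-\alpha}x+W_0\in A)$, where $W_0=\sum_{k=1}^{N}Y_ke^{-\alpha U_k}$ with $N$ Poisson with mean $\lambda$, $(Y_k)$ i.i.d. with density $\theta$, $(U_k)$ i.i.d. uniform on $[0,1]$, all independent. Let $V(x)=1+|x|$, $\mu=e^{-\alpha}$ and $b=1+\lambda K^{1/(4+m)}-e^{-\alpha}$. Then for all $x\in\mathbb{R}$, $$Q_\theta V(x)\le\mu V(x)+b,$$ i.e. $Q_\theta$ satisfies the geometric drift condition $D(V,\mu,b)$.
   Context: $\Theta(K,L,s,m)$ is the set of probability densities $\theta$ on $\mathbb{R}$ with $\int|y|^{4+m}\theta(y)\,dy\le K$ and $\int(1+|u|^2)^s|\mathcal{F}\theta(u)|^2du\le L^2$, where $\mathcal{F}\theta(u)=\int\theta(y)e^{-\mathrm{i}yu}dy$. $Q_\theta V(x)=\int V(y)Q_\theta(x,dy)$. A Markov kernel $P$ satisfies $D(V,\mu,b)$ if $V:\mathbb{R}\to[1,\infty)$ is measurable, $(\mu,b)\in(0,1)\times\mathbb{R}_+$ and $PV\le\mu V+b$. ($Q_\theta$ is the transition kernel of the exponential shot-noise with intensity $\lambda$, decay rate $\alpha$ and mark density $\theta$, sampled at integer times.) *)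

theory Defs
  imports "HOL-Probability.Probability"
begin

definition fourier :: "(real \<Rightarrow> real) \<Rightarrow> real \<Rightarrow> complex" where
  "fourier \<theta> u = (LINT y|lborel. complex_of_real (\<theta> y) * cis (- (y * u)))"

definition Theta :: "real \<Rightarrow> real \<Rightarrow> real \<Rightarrow> real \<Rightarrow> (real \<Rightarrow> real) set" where
  "Theta K L s m = {\<theta>.
     \<theta> \<in> borel_measurable borel \<and> (\<forall>y. 0 \<le> \<theta> y) \<and>
     (\<integral>\<^sup>+ y. ennreal (\<theta> y) \<partial>lborel) = 1 \<and>
     (\<integral>\<^sup>+ y. ennreal (\<bar>y\<bar> powr (4 + m) * \<theta> y) \<partial>lborel) \<le> ennreal K \<and>
     (\<integral>\<^sup>+ u. ennreal ((1 + \<bar>u\<bar>\<^sup>2) powr s * (cmod (fourier \<theta> u))\<^sup>2) \<partial>lborel) \<le> ennreal (L\<^sup>2)}"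

definition mark_law :: "real \<Rightarrow> (real \<Rightarrow> real) \<Rightarrow> real measure" where
  "mark_law \<alpha> \<theta> =
     distr (density lborel \<theta> \<Otimes>\<^sub>M uniform_measure lborel {0..1}) borel
           (\<lambda>(y, u). y * exp (- \<alpha> * u))"

fun conv_pow :: "real measure \<Rightarrow> nat \<Rightarrow> real measure" where
  "conv_pow M 0 = return borel 0"
| "conv_pow M (Suc n) = convolution M (conv_pow M n)"

definition W0_law :: "real \<Rightarrow> real \<Rightarrow> (real \<Rightarrow> real) \<Rightarrow> real measure" where
  "W0_law lam \<alpha> \<theta> = measure_pmf (poisson_pmf lam) \<bind> (\<lambda>n. conv_pow (mark_law \<alpha> \<theta>) n)"

definition Q_kernel :: "real \<Rightarrow> real \<Rightarrow> (real \<Rightarrow> real) \<Rightarrow> real \<Rightarrow> real measure" where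
  "Q_kernel lam \<alpha> \<theta> x = distr (W0_law lam \<alpha> \<theta>) borel (\<lambda>w. exp (- \<alpha>) * x + w)"

definition kernel_apply :: "(real \<Rightarrow> real measure) \<Rightarrow> (real \<Rightarrow> real) \<Rightarrow> real \<Rightarrow> ennreal" where
  "kernel_apply Q V x = (\<integral>\<^sup>+ y. ennreal (V y) \<partial>Q x)"

definition drift_cond :: "(real \<Rightarrow> real measure) \<Rightarrow> (real \<Rightarrow> real) \<Rightarrow> real \<Rightarrow> real \<Rightarrow> bool" where
  "drift_cond Q V \<mu> b \<longleftrightarrow>
     V \<in> borel_measurable borel \<and> (\<forall>x. 1 \<le> V x) \<and> 0 < \<mu> \<and> \<mu> < 1 \<and> 0 \<le> b \<and>
     (\<forall>x. kernel_apply Q V x \<le> ennreal (\<mu> * V x + b))"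

end

theory Submission
  imports Defs
begin

lemma young_pt:
  fixes p c a :: real assumes p: "p>1" and c: "c>0" and a: "a\<ge>0"
  shows "a \<le> c / (p * c powr p) * a powr p + c * (1 - 1/p)"
proof -
  define q where "q = p/(p-1)"
  have q1: "q > 1" using p by (simp add: q_def)
  have pq: "1/p + 1/q = 1" using p by (simp add: q_def field_simps)
  have "a/c * 1 \<le> (a/c) powr p / p + 1 powr q / q"
    by (rule Youngs_inequality[OF p q1 pq]) (use a c in auto)
  also have "1 powr q / q = 1 - 1/p" using pq by simp
  also have "(a/c) powr p = a powr p / c powr p" using a c by (simp add: powr_divide)
  finally have "a/c \<le> a powr p / c powr p / p + (1 - 1/p)" by simp
  hence "c * (a/c) \<le> c * (a powr p / c powr p / p + (1 - 1/p))"
    by (rule mult_left_mono) (use c in auto)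
  hence "a \<le> c * (a powr p / c powr p / p + (1 - 1/p))" using c by simp
  thus ?thesis using c by (simp add: field_simps)
qed

lemma first_moment:
  assumes th: "\<theta> \<in> Theta K L s m" and K: "0 < K" and m: "0 < m"
  shows "(\<integral>\<^sup>+y. ennreal (\<theta> y * \<bar>y\<bar>) \<partial>lborel) \<le> ennreal (K powr (1/(4+m)))"
proof -
  define p where "p = 4 + m"
  define c where "c = K powr (1/p)"
  have p1: "p > 1" using m by (simp add: p_def)
  have c0: "c > 0" using K by (simp add: c_def)
  have cp: "c powr p = K" using K p1 by (simp add: c_def powr_powr)
  have meas[measurable]: "\<theta> \<in> borel_measurable borel" and nn: "\<And>y. 0 \<le> \<theta> y"
    and int1: "(\<integral>\<^sup>+ y. ennreal (\<theta> y) \<partial>lborel) = 1"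
    and intK: "(\<integral>\<^sup>+ y. ennreal (\<bar>y\<bar> powr p * \<theta> y) \<partial>lborel) \<le> ennreal K"
    using th by (auto simp: Theta_def p_def)
  define D where "D = c / (p * K)"
  define E where "E = c * (1 - 1/p)"
  have D0: "D \<ge> 0" using c0 K p1 by (simp add: D_def)
  have E0: "E \<ge> 0" using c0 p1 by (simp add: E_def)
  have pt: "\<theta> y * \<bar>y\<bar> \<le> D * (\<bar>y\<bar> powr p * \<theta> y) + E * \<theta> y" for y
  proof -
    have "\<bar>y\<bar> \<le> D * \<bar>y\<bar> powr p + E"
      using young_pt[OF p1 c0, of "\<bar>y\<bar>"] by (simp add: D_def E_def cp)
    hence "\<theta> y * \<bar>y\<bar> \<le> \<theta> y * (D * \<bar>y\<bar> powr p + E)"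
      by (rule mult_left_mono) (rule nn)
    thus ?thesis by (simp add: algebra_simps)
  qed
  have "(\<integral>\<^sup>+y. ennreal (\<theta> y * \<bar>y\<bar>) \<partial>lborel)
      \<le> (\<integral>\<^sup>+y. ennreal D * ennreal (\<bar>y\<bar> powr p * \<theta> y) + ennreal E * ennreal (\<theta> y) \<partial>lborel)"
  proof (rule nn_integral_mono)
    fix y
    have P0: "0 \<le> \<bar>y\<bar> powr p * \<theta> y" using nn by simp
    have "ennreal (D * (\<bar>y\<bar> powr p * \<theta> y) + E * \<theta> y)
        = ennreal D * ennreal (\<bar>y\<bar> powr p * \<theta> y) + ennreal E * ennreal (\<theta> y)"
      using D0 E0 P0 nn[of y] by (simp add: ennreal_plus ennreal_mult)
    moreover have "ennreal (\<theta> y * \<bar>y\<bar>) \<le> ennreal (D * (\<bar>y\<bar> powr p * \<theta> y) + E * \<theta> y)"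
      by (rule ennreal_leI[OF pt])
    ultimately show "ennreal (\<theta> y * \<bar>y\<bar>) \<le> ennreal D * ennreal (\<bar>y\<bar> powr p * \<theta> y) + ennreal E * ennreal (\<theta> y)"
      by simp
  qed
  also have "\<dots> = ennreal D * (\<integral>\<^sup>+y. ennreal (\<bar>y\<bar> powr p * \<theta> y) \<partial>lborel)
      + ennreal E * (\<integral>\<^sup>+y. ennreal (\<theta> y) \<partial>lborel)"
    by (simp add: nn_integral_add nn_integral_cmult)
  also have "\<dots> \<le> ennreal D * ennreal K + ennreal E * 1"
    using intK int1 by (intro add_mono mult_left_mono) auto
  also have "\<dots> = ennreal (D * K + E)"
    using D0 E0 K by (simp add: ennreal_mult ennreal_plus)
  also have "D * K + E = c" using K p1 by (simp add: D_def E_def field_simps)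
  finally show ?thesis by (simp add: c_def p_def)
qed


lemma Theta_facts:
  assumes "\<theta> \<in> Theta K L s m"
  shows "\<theta> \<in> borel_measurable borel" "\<And>y. 0 \<le> \<theta> y" "(\<integral>\<^sup>+ y. ennreal (\<theta> y) \<partial>lborel) = 1"
  using assms by (auto simp: Theta_def)

lemma prob_density:
  assumes "\<theta> \<in> Theta K L s m"
  shows "prob_space (density lborel \<theta>)"
proof
  note f = Theta_facts[OF assms]
  have [measurable]: "\<theta> \<in> borel_measurable borel" by (rule f(1))
  show "emeasure (density lborel \<theta>) (space (density lborel \<theta>)) = 1"
    using f(3) by (simp add: emeasure_density)
qed

lemma prob_unif: "prob_space (uniform_measure lborel {0..1::real})"
  by (rule prob_space_uniform_measure) auto

lemma mark_law_prob:
  assumes "\<theta> \<in> Theta K L s m"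
  shows "prob_space (mark_law \<alpha> \<theta>)" "sets (mark_law \<alpha> \<theta>) = sets borel"
proof -
  interpret D: prob_space "density lborel \<theta>" by (rule prob_density[OF assms])
  interpret U: prob_space "uniform_measure lborel {0..1::real}" by (rule prob_unif)
  interpret P: prob_space "density lborel \<theta> \<Otimes>\<^sub>M uniform_measure lborel {0..1::real}"
    by (rule prob_space_pair) unfold_locales
  show "prob_space (mark_law \<alpha> \<theta>)" unfolding mark_law_def
    by (rule P.prob_space_distr) simp
  show "sets (mark_law \<alpha> \<theta>) = sets borel" by (simp add: mark_law_def)
qed

lemma mark_law_moment:
  assumes th: "\<theta> \<in> Theta K L s m" and K: "0 < K" and m: "0 < m" and a: "0 < \<alpha>"
  shows "(\<integral>\<^sup>+w. ennreal \<bar>w\<bar> \<partial>mark_law \<alpha> \<theta>) \<le> ennreal (K powr (1/(4+m)))"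
proof -
  note f = Theta_facts[OF th]
  have [measurable]: "\<theta> \<in> borel_measurable borel" by (rule f(1))
  interpret D: prob_space "density lborel \<theta>" by (rule prob_density[OF th])
  interpret U: prob_space "uniform_measure lborel {0..1::real}" by (rule prob_unif)
  have "(\<integral>\<^sup>+w. ennreal \<bar>w\<bar> \<partial>mark_law \<alpha> \<theta>)
     = (\<integral>\<^sup>+z. ennreal \<bar>(case z of (y, u) \<Rightarrow> y * exp (- \<alpha> * u))\<bar> \<partial>(density lborel \<theta> \<Otimes>\<^sub>M uniform_measure lborel {0..1::real}))"
    unfolding mark_law_def by (subst nn_integral_distr) auto
  also have "\<dots> = (\<integral>\<^sup>+y. \<integral>\<^sup>+u. ennreal \<bar>y * exp (- \<alpha> * u)\<bar> \<partial>uniform_measure lborel {0..1::real} \<partial>density lborel \<theta>)"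
    by (subst U.nn_integral_fst[symmetric]) (auto simp: case_prod_beta)
  also have "\<dots> \<le> (\<integral>\<^sup>+y. ennreal \<bar>y\<bar> \<partial>density lborel \<theta>)"
  proof (rule nn_integral_mono)
    fix y :: real
    have "(\<integral>\<^sup>+u. ennreal \<bar>y * exp (- \<alpha> * u)\<bar> \<partial>uniform_measure lborel {0..1::real})
        \<le> (\<integral>\<^sup>+u. ennreal \<bar>y\<bar> \<partial>uniform_measure lborel {0..1::real})"
    proof (rule nn_integral_mono_AE)
      show "AE u in uniform_measure lborel {0..1::real}. ennreal \<bar>y * exp (- \<alpha> * u)\<bar> \<le> ennreal \<bar>y\<bar>"
      proof (rule AE_uniform_measureI)
        show "{0..1::real} \<in> sets lborel" by simp
        show "AE u in lborel. u \<in> {0..1} \<longrightarrow> ennreal \<bar>y * exp (- \<alpha> * u)\<bar> \<le> ennreal \<bar>y\<bar>"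
        proof (rule AE_I2, rule impI)
          fix u :: real assume "u \<in> {0..1}"
          hence "exp (- \<alpha> * u) \<le> 1" using a by auto
          hence "\<bar>y * exp (- \<alpha> * u)\<bar> \<le> \<bar>y\<bar>"
            by (simp add: abs_mult mult_left_le)
          thus "ennreal \<bar>y * exp (- \<alpha> * u)\<bar> \<le> ennreal \<bar>y\<bar>" by (rule ennreal_leI)
        qed
      qed
    qed
    also have "\<dots> = ennreal \<bar>y\<bar>" by (simp add: U.emeasure_space_1)
    finally show "(\<integral>\<^sup>+u. ennreal \<bar>y * exp (- \<alpha> * u)\<bar> \<partial>uniform_measure lborel {0..1::real}) \<le> ennreal \<bar>y\<bar>" .
  qed
  also have "\<dots> = (\<integral>\<^sup>+y. ennreal (\<theta> y * \<bar>y\<bar>) \<partial>lborel)"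
    using f(2) by (subst nn_integral_density) (auto simp: ennreal_mult)
  also have "\<dots> \<le> ennreal (K powr (1/(4+m)))" by (rule first_moment[OF th K m])
  finally show ?thesis .
qed


lemma conv_pow_prob:
  assumes M: "prob_space M" and sM: "sets M = sets borel"
  shows "prob_space (conv_pow M n) \<and> sets (conv_pow M n) = sets borel"
proof (induction n)
  case 0
  show ?case by (simp add: prob_space_return)
next
  case (Suc n)
  interpret M: prob_space M by (rule M)
  interpret N: prob_space "conv_pow M n" using Suc by simp
  interpret P: prob_space "M \<Otimes>\<^sub>M conv_pow M n"
    by (rule prob_space_pair) unfold_locales
  have [measurable_cong]: "sets M = sets borel" "sets (conv_pow M n) = sets borel"
    using sM Suc by auto
  have "prob_space (convolution M (conv_pow M n))" unfolding convolution_def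
    by (rule P.prob_space_distr) measurable
  thus ?case by simp
qed

lemma conv_pow_moment:
  assumes M: "prob_space M" and sM: "sets M = sets borel"
    and mom: "(\<integral>\<^sup>+w. ennreal \<bar>w\<bar> \<partial>M) \<le> ennreal C" and C: "0 \<le> C"
  shows "0 \<le> A \<Longrightarrow> (\<integral>\<^sup>+w. ennreal (A + \<bar>w\<bar>) \<partial>conv_pow M n) \<le> ennreal (A + real n * C)"
proof (induction n arbitrary: A)
  case 0
  have "(\<integral>\<^sup>+w. ennreal (A + \<bar>w\<bar>) \<partial>return borel 0) = ennreal (A + \<bar>0\<bar>)"
    by (subst nn_integral_return) auto
  thus ?case by simp
next
  case (Suc n)
  interpret M: prob_space M by (rule M)
  have N: "prob_space (conv_pow M n)" "sets (conv_pow M n) = sets borel"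
    using conv_pow_prob[OF M sM] by auto
  interpret N: prob_space "conv_pow M n" by (rule N(1))
  have "(\<integral>\<^sup>+w. ennreal (A + \<bar>w\<bar>) \<partial>conv_pow M (Suc n))
      = (\<integral>\<^sup>+x. \<integral>\<^sup>+y. ennreal (A + \<bar>x + y\<bar>) \<partial>conv_pow M n \<partial>M)"
    by (simp, rule nn_integral_convolution)
       (auto simp: sM N(2) intro: prob_space.axioms(1) M N(1))
  also have "\<dots> \<le> (\<integral>\<^sup>+x. \<integral>\<^sup>+y. ennreal ((A + \<bar>x\<bar>) + \<bar>y\<bar>) \<partial>conv_pow M n \<partial>M)"
    by (intro nn_integral_mono ennreal_leI) (simp add: abs_triangle_ineq)
  also have "\<dots> \<le> (\<integral>\<^sup>+x. ennreal ((A + real n * C) + \<bar>x\<bar>) \<partial>M)"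
  proof (rule nn_integral_mono)
    fix x
    have "(\<integral>\<^sup>+y. ennreal ((A + \<bar>x\<bar>) + \<bar>y\<bar>) \<partial>conv_pow M n) \<le> ennreal ((A + \<bar>x\<bar>) + real n * C)"
      using Suc.prems by (intro Suc.IH) simp
    thus "(\<integral>\<^sup>+y. ennreal ((A + \<bar>x\<bar>) + \<bar>y\<bar>) \<partial>conv_pow M n) \<le> ennreal ((A + real n * C) + \<bar>x\<bar>)"
      by (simp add: algebra_simps)
  qed
  also have "\<dots> = (\<integral>\<^sup>+x. ennreal (A + real n * C) + ennreal \<bar>x\<bar> \<partial>M)"
    using Suc.prems C by (intro nn_integral_cong) (simp add: ennreal_plus)
  also have "\<dots> = ennreal (A + real n * C) + (\<integral>\<^sup>+x. ennreal \<bar>x\<bar> \<partial>M)"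
  proof -
    have [measurable_cong]: "sets M = sets borel" by (rule sM)
    show ?thesis by (subst nn_integral_add) (auto simp: M.emeasure_space_1)
  qed
  also have "\<dots> \<le> ennreal (A + real n * C) + ennreal C"
    using mom by (rule add_left_mono)
  also have "\<dots> = ennreal (A + real n * C + C)"
    using Suc.prems C by (intro ennreal_plus[symmetric]) auto
  also have "A + real n * C + C = A + real (Suc n) * C" by (simp add: distrib_right)
  finally show ?case .
qed
lemma poisson_sums:
  assumes l: "0 < lam"
  shows "(\<lambda>n. pmf (poisson_pmf lam) n) sums 1"
    and "(\<lambda>n. real n * pmf (poisson_pmf lam) n) sums lam"
proof -
  have e: "(\<lambda>n. lam ^ n / fact n) sums exp lam"
    using exp_converges[of lam] by (simp add: divide_inverse_commute scaleR_conv_of_real)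
  have ee: "exp lam * exp (-lam) = 1" by (simp add: mult_exp_exp)
  have f1: "(\<lambda>n. lam ^ n / fact n * exp (-lam)) = (\<lambda>n. pmf (poisson_pmf lam) n)"
    by (rule ext) (simp add: pmf_poisson[OF l])
  have "(\<lambda>n. lam ^ n / fact n * exp (-lam)) sums (exp lam * exp (-lam))"
    by (rule sums_mult2[OF e])
  thus "(\<lambda>n. pmf (poisson_pmf lam) n) sums 1"
    unfolding f1 ee .
  have f2: "(\<lambda>n. lam * (lam ^ n / fact n * exp (-lam))) = (\<lambda>n. real (Suc n) * pmf (poisson_pmf lam) (Suc n))"
  proof (rule ext)
    fix n
    have "real (Suc n) * pmf (poisson_pmf lam) (Suc n) = real (Suc n) * (lam * lam ^ n / (real (Suc n) * fact n) * exp (-lam))"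
      by (simp add: pmf_poisson[OF l] fact_Suc del: of_nat_Suc)
    also have "\<dots> = lam * (lam ^ n / fact n * exp (-lam))"
      by (simp add: divide_simps del: of_nat_Suc)
    finally show "lam * (lam ^ n / fact n * exp (-lam)) = real (Suc n) * pmf (poisson_pmf lam) (Suc n)" by simp
  qed
  have "(\<lambda>n. lam * (lam ^ n / fact n * exp (-lam))) sums (lam * (exp lam * exp (-lam)))"
    by (rule sums_mult[OF sums_mult2[OF e]])
  hence "(\<lambda>n. real (Suc n) * pmf (poisson_pmf lam) (Suc n)) sums lam"
    unfolding f2 ee by simp
  hence "(\<lambda>n. real n * pmf (poisson_pmf lam) n) sums (lam + real 0 * pmf (poisson_pmf lam) 0)"
    by (subst sums_Suc_iff[symmetric])
  thus "(\<lambda>n. real n * pmf (poisson_pmf lam) n) sums lam" by simp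
qed

lemma poisson_bound:
  assumes l: "0 < lam" and A: "0 \<le> A" and C: "0 \<le> C"
  shows "(\<integral>\<^sup>+n. ennreal (A + real n * C) \<partial>measure_pmf (poisson_pmf lam)) = ennreal (A + lam * C)"
proof -
  have s: "(\<lambda>n. pmf (poisson_pmf lam) n * (A + real n * C)) sums (1 * A + lam * C)"
  proof -
    have "(\<lambda>n. pmf (poisson_pmf lam) n * A + C * (real n * pmf (poisson_pmf lam) n)) sums (1 * A + C * lam)"
      by (intro sums_add sums_mult2 sums_mult poisson_sums[OF l])
    thus ?thesis by (simp add: algebra_simps)
  qed
  have "(\<integral>\<^sup>+n. ennreal (A + real n * C) \<partial>measure_pmf (poisson_pmf lam))
      = (\<integral>\<^sup>+n. ennreal (pmf (poisson_pmf lam) n * (A + real n * C)) \<partial>count_space UNIV)"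
    unfolding nn_integral_measure_pmf using A C by (simp add: ennreal_mult)
  also have "\<dots> = (\<Sum>n. ennreal (pmf (poisson_pmf lam) n * (A + real n * C)))"
    by (rule nn_integral_count_space_nat)
  also have "\<dots> = ennreal (1 * A + lam * C)"
    by (rule suminf_ennreal_eq[OF _ s]) (use A C in auto)
  finally show ?thesis by simp
qed

theorem mainTheorem5:
  fixes lam \<alpha> K L m s :: real and \<theta> :: "real \<Rightarrow> real"
  assumes "0 < lam" "0 < \<alpha>" "0 < K" "0 < L" "0 < m" "s > 1/2"
    and "\<theta> \<in> Theta K L s m"
  shows "(\<forall>x. kernel_apply (Q_kernel lam \<alpha> \<theta>) (\<lambda>x. 1 + \<bar>x\<bar>) x
            \<le> ennreal (exp (- \<alpha>) * (1 + \<bar>x\<bar>) + (1 + lam * K powr (1 / (4 + m)) - exp (- \<alpha>))))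
         \<and> drift_cond (Q_kernel lam \<alpha> \<theta>) (\<lambda>x. 1 + \<bar>x\<bar>) (exp (- \<alpha>))
              (1 + lam * K powr (1 / (4 + m)) - exp (- \<alpha>))"
proof -
  note th = assms(7)
  define C where "C = K powr (1 / (4 + m))"
  define Mk where "Mk = mark_law \<alpha> \<theta>"
  define W where "W = W0_law lam \<alpha> \<theta>"
  have C0: "0 \<le> C" by (simp add: C_def)
  have Mk: "prob_space Mk" "sets Mk = sets borel" using mark_law_prob[OF th] by (auto simp: Mk_def)
  have momC: "(\<integral>\<^sup>+w. ennreal \<bar>w\<bar> \<partial>Mk) \<le> ennreal C"
    unfolding Mk_def C_def by (rule mark_law_moment[OF th assms(3) assms(5) assms(2)])
  have cp: "\<And>n. prob_space (conv_pow Mk n) \<and> sets (conv_pow Mk n) = sets borel"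
    by (rule conv_pow_prob[OF Mk])
  have meas: "(\<lambda>n. conv_pow Mk n) \<in> measurable (measure_pmf (poisson_pmf lam)) (subprob_algebra borel)"
    using cp by (auto simp: space_subprob_algebra intro: prob_space_imp_subprob_space)
  have sW: "sets W = sets borel"
    unfolding W_def W0_law_def Mk_def[symmetric]
    by (rule sets_bind) (use cp in auto)
  have main: "kernel_apply (Q_kernel lam \<alpha> \<theta>) (\<lambda>x. 1 + \<bar>x\<bar>) x
            \<le> ennreal (exp (- \<alpha>) * (1 + \<bar>x\<bar>) + (1 + lam * C - exp (- \<alpha>)))" for x
  proof -
    define A where "A = 1 + exp (- \<alpha>) * \<bar>x\<bar>"
    have A0: "0 \<le> A" by (simp add: A_def)
    have [measurable_cong]: "sets W = sets borel" by (rule sW)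
    have "kernel_apply (Q_kernel lam \<alpha> \<theta>) (\<lambda>x. 1 + \<bar>x\<bar>) x
        = (\<integral>\<^sup>+w. ennreal (1 + \<bar>exp (- \<alpha>) * x + w\<bar>) \<partial>W)"
      unfolding kernel_apply_def Q_kernel_def W_def[symmetric]
      by (subst nn_integral_distr) auto
    also have "\<dots> \<le> (\<integral>\<^sup>+w. ennreal (A + \<bar>w\<bar>) \<partial>W)"
    proof (intro nn_integral_mono ennreal_leI)
      fix w
      have "\<bar>exp (- \<alpha>) * x + w\<bar> \<le> \<bar>exp (- \<alpha>) * x\<bar> + \<bar>w\<bar>" by (rule abs_triangle_ineq)
      thus "1 + \<bar>exp (- \<alpha>) * x + w\<bar> \<le> A + \<bar>w\<bar>" by (simp add: A_def abs_mult)
    qed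
    also have "\<dots> = (\<integral>\<^sup>+n. \<integral>\<^sup>+w. ennreal (A + \<bar>w\<bar>) \<partial>conv_pow Mk n \<partial>measure_pmf (poisson_pmf lam))"
      unfolding W_def W0_law_def Mk_def[symmetric]
      by (rule nn_integral_bind[OF _ meas]) simp
    also have "\<dots> \<le> (\<integral>\<^sup>+n. ennreal (A + real n * C) \<partial>measure_pmf (poisson_pmf lam))"
      by (intro nn_integral_mono conv_pow_moment[OF Mk momC C0 A0])
    also have "\<dots> = ennreal (A + lam * C)"
      by (rule poisson_bound[OF assms(1) A0 C0])
    also have "A + lam * C = exp (- \<alpha>) * (1 + \<bar>x\<bar>) + (1 + lam * C - exp (- \<alpha>))"
      by (simp add: A_def algebra_simps)
    finally show ?thesis .
  qed
  have e1: "exp (- \<alpha>) < 1" using assms(2) by simp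
  have b0: "0 \<le> 1 + lam * C - exp (- \<alpha>)" using e1 C0 assms(1) by (smt (verit) mult_nonneg_nonneg)
  show ?thesis
    unfolding drift_cond_def C_def[symmetric]
    using main e1 b0 by auto
qed

end
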